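(* Let $R$ be a commutative ring with identity; for $a\in R$ let $\mathfrak{a}=aR$. The following statements are equivalent: (1) $R$ is reduced (has no nonzero nilpotent elements); (2) $a\Gamma_{a}(R)=0$ for all $a\in R$; (3) $(0:_R a)=(0:_R a^{k})$ for all $a\in R$ and all $k\in\mathbb{Z}^{+}$; (4) $\varinjlim_{k}\operatorname{Hom}_R(R/\mathfrak{a}^{k},R)\cong \operatorname{Hom}_R(R/\mathfrak{a},R)$ for all $a\in R$; (5) $\Gamma_{a}(R)\cong \operatorname{Hom}_R(R/\mathfrak{a},R)$ for all $a\in R$; (6) for all $a\in R$, $0\to \Gamma_{a}(R)\to R\to aR\to 0$ is a short exact sequence, where the first map is the inclusion and the second is $r\mapsto ar$.
   Context: For $a\in R$: $\Gamma_{a}(R)=\{r\in R \mid a^{k}r=0 \text{ for some } k\in\mathbb{Z}^{+}\}$, $a\Gamma_{a}(R)=\{ar \mid r\in \Gamma_a(R)\}$, and $(0:_R a^{k})=\{r\in R\mid a^{k}r=0\}$. *)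

theory Defs
  imports Main
begin

definition reduced_ring :: "'a::comm_ring_1 itself \<Rightarrow> bool" where
  "reduced_ring _ \<longleftrightarrow> (\<forall>x::'a. \<forall>n::nat. x ^ n = 0 \<longrightarrow> x = 0)"

definition Gamma :: "'a::comm_ring_1 \<Rightarrow> 'a set" where
  "Gamma a = {r. \<exists>k::nat. k \<ge> 1 \<and> a ^ k * r = 0}"

definition annih :: "'a::comm_ring_1 \<Rightarrow> nat \<Rightarrow> 'a set" where
  "annih a k = {r. a ^ k * r = 0}"

(* principal ideal (a^k)R = \<frak>a^k and its cosets: the quotient module R/\<frak>a^k *)
definition qclass :: "'a::comm_ring_1 \<Rightarrow> nat \<Rightarrow> 'a \<Rightarrow> 'a set" where
  "qclass a k x = {x + a ^ k * s | s. True}"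

definition quot :: "'a::comm_ring_1 \<Rightarrow> nat \<Rightarrow> 'a set set" where
  "quot a k = range (qclass a k)"

(* Hom_R(R/\<frak>a^k, R): R-linear maps on the quotient module R/\<frak>a^k
   (with [x]+[y]=[x+y], r[x]=[rx]), made extensional (value 0 off the carrier) *)
definition HomQ :: "'a::comm_ring_1 \<Rightarrow> nat \<Rightarrow> ('a set \<Rightarrow> 'a) set" where
  "HomQ a k = {\<phi>. (\<forall>x y. \<phi> (qclass a k (x + y)) = \<phi> (qclass a k x) + \<phi> (qclass a k y))
                \<and> (\<forall>r x. \<phi> (qclass a k (r * x)) = r * \<phi> (qclass a k x))
                \<and> (\<forall>C. C \<notin> quot a k \<longrightarrow> \<phi> C = 0)}"

definition hom_add :: "('a set \<Rightarrow> 'a::comm_ring_1) \<Rightarrow> ('a set \<Rightarrow> 'a) \<Rightarrow> ('a set \<Rightarrow> 'a)" where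
  "hom_add \<phi> \<psi> = (\<lambda>C. \<phi> C + \<psi> C)"

definition hom_smul :: "'a::comm_ring_1 \<Rightarrow> ('a set \<Rightarrow> 'a) \<Rightarrow> ('a set \<Rightarrow> 'a)" where
  "hom_smul r \<phi> = (\<lambda>C. r * \<phi> C)"

(* transition map Hom(R/\<frak>a^k,R) \<rightarrow> Hom(R/\<frak>a^m,R) (k \<le> m), induced by the
   canonical projection R/\<frak>a^m \<rightarrow> R/\<frak>a^k, [x]_m \<mapsto> [x]_k *)
definition trans_map :: "'a::comm_ring_1 \<Rightarrow> nat \<Rightarrow> nat \<Rightarrow> ('a set \<Rightarrow> 'a) \<Rightarrow> ('a set \<Rightarrow> 'a)" where
  "trans_map a k m \<phi> = (\<lambda>C. if C \<in> quot a m
        then \<phi> (qclass a k (SOME x. C = qclass a m x)) else 0)"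

(* direct limit over k \<in> Z^+ of Hom(R/\<frak>a^k,R): equivalence classes of pairs (k,\<phi>) *)
definition dl_rel :: "'a::comm_ring_1 \<Rightarrow> ((nat \<times> ('a set \<Rightarrow> 'a)) \<times> (nat \<times> ('a set \<Rightarrow> 'a))) set" where
  "dl_rel a = {((k,\<phi>),(l,\<psi>)). k \<ge> 1 \<and> l \<ge> 1 \<and> \<phi> \<in> HomQ a k \<and> \<psi> \<in> HomQ a l \<and>
       (\<exists>m. k \<le> m \<and> l \<le> m \<and> trans_map a k m \<phi> = trans_map a l m \<psi>)}"

definition dl_carrier :: "'a::comm_ring_1 \<Rightarrow> (nat \<times> ('a set \<Rightarrow> 'a)) set set" where
  "dl_carrier a = {dl_rel a `` {(k,\<phi>)} | k \<phi>. k \<ge> 1 \<and> \<phi> \<in> HomQ a k}"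

definition dl_add :: "'a::comm_ring_1 \<Rightarrow> (nat \<times> ('a set \<Rightarrow> 'a)) set \<Rightarrow> (nat \<times> ('a set \<Rightarrow> 'a)) set
                      \<Rightarrow> (nat \<times> ('a set \<Rightarrow> 'a)) set" where
  "dl_add a X Y = (let (k,\<phi>) = (SOME p. p \<in> X); (l,\<psi>) = (SOME q. q \<in> Y); m = max k l
      in dl_rel a `` {(m, hom_add (trans_map a k m \<phi>) (trans_map a l m \<psi>))})"

definition dl_smul :: "'a::comm_ring_1 \<Rightarrow> 'a \<Rightarrow> (nat \<times> ('a set \<Rightarrow> 'a)) set \<Rightarrow> (nat \<times> ('a set \<Rightarrow> 'a)) set" where
  "dl_smul a r X = (let (k,\<phi>) = (SOME p. p \<in> X) in dl_rel a `` {(k, hom_smul r \<phi>)})"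

definition mod_iso :: "'m set \<Rightarrow> ('m \<Rightarrow> 'm \<Rightarrow> 'm) \<Rightarrow> ('a \<Rightarrow> 'm \<Rightarrow> 'm)
                    \<Rightarrow> 'n set \<Rightarrow> ('n \<Rightarrow> 'n \<Rightarrow> 'n) \<Rightarrow> ('a \<Rightarrow> 'n \<Rightarrow> 'n) \<Rightarrow> bool" where
  "mod_iso M addM smulM N addN smulN \<longleftrightarrow> (\<exists>f. bij_betw f M N
      \<and> (\<forall>x\<in>M. \<forall>y\<in>M. f (addM x y) = addN (f x) (f y))
      \<and> (\<forall>r. \<forall>x\<in>M. f (smulM r x) = smulN r (f x)))"

definition ses_Gamma :: "'a::comm_ring_1 \<Rightarrow> bool" where
  "ses_Gamma a \<longleftrightarrow> inj_on id (Gamma a)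
      \<and> id ` Gamma a = {r. a * r = 0}
      \<and> (\<lambda>r. a * r) ` UNIV = {a * s | s. True}"

end

theory Submission
  imports Defs
begin

definition hq :: "'a::comm_ring_1 \<Rightarrow> nat \<Rightarrow> 'a \<Rightarrow> 'a set \<Rightarrow> 'a" where
  "hq a k e = (\<lambda>C. if C \<in> quot a k then (SOME x. C = qclass a k x) * e else 0)"

definition vl :: "'a::comm_ring_1 \<Rightarrow> nat \<Rightarrow> ('a set \<Rightarrow> 'a) \<Rightarrow> 'a" where
  "vl a k \<phi> = \<phi> (qclass a k 1)"

definition cls :: "'a::comm_ring_1 \<Rightarrow> 'a \<Rightarrow> (nat \<times> ('a set \<Rightarrow> 'a)) set" where
  "cls a e = {(l,\<psi>). l \<ge> 1 \<and> \<psi> \<in> HomQ a l \<and> vl a l \<psi> = e}"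

lemma qclass_mem: "x \<in> qclass a k x"
  unfolding qclass_def by (rule CollectI, rule exI[of _ 0]) simp

lemma qclass_eqD: "qclass a k x = qclass a k y \<Longrightarrow> \<exists>s. x = y + a ^ k * s"
  using qclass_mem[of x a k] unfolding qclass_def by auto

lemma qclass_eqI: "x = y + a ^ k * s \<Longrightarrow> qclass a k x = qclass a k y"
  unfolding qclass_def
proof (intro set_eqI iffI)
  fix z assume "x = y + a ^ k * s" "z \<in> {x + a ^ k * s |s. True}"
  then obtain t where "z = x + a^k*t" by auto
  then have "z = y + a^k*(s+t)" using \<open>x = _\<close> by (simp add: algebra_simps)
  then show "z \<in> {y + a ^ k * s |s. True}" by blast
next
  fix z assume "x = y + a ^ k * s" "z \<in> {y + a ^ k * s |s. True}"
  then obtain t where "z = y + a^k*t" by auto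
  then have "z = x + a^k*(t-s)" using \<open>x = _\<close> by (simp add: algebra_simps)
  then show "z \<in> {x + a ^ k * s |s. True}" by blast
qed

lemma hq_val:
  assumes "a ^ k * e = 0"
  shows "hq a k e (qclass a k y) = y * e"
proof -
  have q: "qclass a k y \<in> quot a k" unfolding quot_def by simp
  have "\<exists>x. qclass a k y = qclass a k x" by blast
  then have h: "qclass a k y = qclass a k (SOME x. qclass a k y = qclass a k x)"
    by (rule someI_ex)
  define x where "x = (SOME x. qclass a k y = qclass a k x)"
  from h have "qclass a k y = qclass a k x" unfolding x_def .
  then obtain s where "y = x + a^k*s" using qclass_eqD by blast
  then have "y * e = x * e + s * (a^k * e)" by (simp add: algebra_simps)
  then have "y * e = x * e" using assms by simp
  then show ?thesis using q unfolding hq_def x_def by simp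
qed

lemma hq_vl: "a ^ k * e = 0 \<Longrightarrow> vl a k (hq a k e) = e"
  unfolding vl_def by (simp add: hq_val)

lemma HomQ_zero: assumes "\<phi> \<in> HomQ a k" shows "\<phi> (qclass a k 0) = 0"
proof -
  have "\<phi> (qclass a k (0 + 0)) = \<phi> (qclass a k 0) + \<phi> (qclass a k 0)"
    using assms unfolding HomQ_def by blast
  then show ?thesis by simp
qed

lemma HomQ_val: assumes "\<phi> \<in> HomQ a k" shows "\<phi> (qclass a k x) = x * vl a k \<phi>"
proof -
  have "\<phi> (qclass a k (x * 1)) = x * \<phi> (qclass a k 1)"
    using assms unfolding HomQ_def by blast
  then show ?thesis unfolding vl_def by simp
qed

lemma HomQ_ann: assumes "\<phi> \<in> HomQ a k" shows "a ^ k * vl a k \<phi> = 0"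
proof -
  have "qclass a k (a^k) = qclass a k 0" by (rule qclass_eqI[of _ _ _ _ 1]) simp
  then show ?thesis using HomQ_val[OF assms, of "a^k"] HomQ_zero[OF assms] by simp
qed

lemma HomQ_hq: assumes "\<phi> \<in> HomQ a k" shows "\<phi> = hq a k (vl a k \<phi>)"
proof
  fix C
  show "\<phi> C = hq a k (vl a k \<phi>) C"
  proof (cases "C \<in> quot a k")
    case True
    then obtain y where "C = qclass a k y" unfolding quot_def by auto
    then show ?thesis using HomQ_val[OF assms] hq_val[OF HomQ_ann[OF assms]] by simp
  next
    case False
    then show ?thesis using assms unfolding HomQ_def hq_def by auto
  qed
qed

lemma hq_HomQ: assumes "a ^ k * e = 0" shows "hq a k e \<in> HomQ a k"
  unfolding HomQ_def using hq_val[OF assms]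
  by (auto simp: algebra_simps hq_def quot_def)

lemma hq_add: "hom_add (hq a k e1) (hq a k e2) = hq a k (e1 + e2)"
  unfolding hom_add_def hq_def by (auto simp: algebra_simps)

lemma hq_smul: "hom_smul r (hq a k e) = hq a k (r * e)"
  unfolding hom_smul_def hq_def by (auto simp: algebra_simps)

lemma pow_ann_mono: assumes "a ^ k * e = 0" "k \<le> m" shows "a ^ m * (e::'a::comm_ring_1) = 0"
proof -
  obtain d where "m = k + d" using assms(2) le_Suc_ex by blast
  then have "a ^ m * e = a ^ d * (a ^ k * e)" by (simp add: power_add algebra_simps)
  then show ?thesis using assms(1) by simp
qed

lemma trans_hq:
  assumes "a ^ k * e = 0" "k \<le> m"
  shows "trans_map a k m (hq a k e) = hq a m e"
proof
  fix C
  have em: "a ^ m * e = 0" using pow_ann_mono assms by blast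
  show "trans_map a k m (hq a k e) C = hq a m e C"
  proof (cases "C \<in> quot a m")
    case True
    then obtain y where Cy: "C = qclass a m y" unfolding quot_def by auto
    define x where "x = (SOME x. C = qclass a m x)"
    have "\<exists>x. C = qclass a m x" using Cy by blast
    then have "C = qclass a m x" unfolding x_def by (rule someI_ex)
    then obtain s where "y = x + a^m*s" using Cy qclass_eqD by metis
    then have "y * e = x * e + s * (a^m * e)" by (simp add: algebra_simps)
    then have "y * e = x * e" using em by simp
    then show ?thesis using True Cy hq_val[OF em] hq_val[OF assms(1)]
      unfolding trans_map_def x_def by simp
  next
    case False
    then show ?thesis unfolding trans_map_def hq_def by simp
  qed
qed

lemma dl_rel_char:
  "dl_rel a = {((k,\<phi>),(l,\<psi>)). k \<ge> 1 \<and> l \<ge> 1 \<and> \<phi> \<in> HomQ a k \<and> \<psi> \<in> HomQ a l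
       \<and> vl a k \<phi> = vl a l \<psi>}"
proof (intro set_eqI)
  fix p :: "(nat \<times> ('a set \<Rightarrow> 'a)) \<times> (nat \<times> ('a set \<Rightarrow> 'a))"
  obtain k \<phi> l \<psi> where p: "p = ((k,\<phi>),(l,\<psi>))" by (metis prod.exhaust)
  have "(k \<ge> 1 \<and> l \<ge> 1 \<and> \<phi> \<in> HomQ a k \<and> \<psi> \<in> HomQ a l \<and>
       (\<exists>m. k \<le> m \<and> l \<le> m \<and> trans_map a k m \<phi> = trans_map a l m \<psi>))
     \<longleftrightarrow> (k \<ge> 1 \<and> l \<ge> 1 \<and> \<phi> \<in> HomQ a k \<and> \<psi> \<in> HomQ a l \<and> vl a k \<phi> = vl a l \<psi>)"
    (is "?L \<longleftrightarrow> ?R")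
  proof
    assume L: ?L
    then obtain m where m: "k \<le> m" "l \<le> m" "trans_map a k m \<phi> = trans_map a l m \<psi>" by blast
    have e1: "a^k * vl a k \<phi> = 0" and e2: "a^l * vl a l \<psi> = 0" using L HomQ_ann by blast+
    have "trans_map a k m \<phi> = hq a m (vl a k \<phi>)"
      using trans_hq[OF e1 m(1)] HomQ_hq[of \<phi> a k] L by simp
    moreover have "trans_map a l m \<psi> = hq a m (vl a l \<psi>)"
      using trans_hq[OF e2 m(2)] HomQ_hq[of \<psi> a l] L by simp
    ultimately have "hq a m (vl a k \<phi>) = hq a m (vl a l \<psi>)" using m by simp
    then have "vl a m (hq a m (vl a k \<phi>)) = vl a m (hq a m (vl a l \<psi>))" by simp
    then show ?R using L hq_vl pow_ann_mono[OF e1 m(1)] pow_ann_mono[OF e2 m(2)] by metis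
  next
    assume R: ?R
    define m where "m = max k l"
    have e1: "a^k * vl a k \<phi> = 0" and e2: "a^l * vl a l \<psi> = 0" using R HomQ_ann by blast+
    have "trans_map a k m \<phi> = hq a m (vl a k \<phi>)"
      using trans_hq[OF e1, of m] HomQ_hq[of \<phi> a k] R m_def by simp
    moreover have "trans_map a l m \<psi> = hq a m (vl a l \<psi>)"
      using trans_hq[OF e2, of m] HomQ_hq[of \<psi> a l] R m_def by simp
    ultimately show ?L using R m_def by (intro conjI exI[of _ m]) auto
  qed
  then show "p \<in> dl_rel a \<longleftrightarrow> p \<in> {((k,\<phi>),(l,\<psi>)). k \<ge> 1 \<and> l \<ge> 1 \<and> \<phi> \<in> HomQ a k \<and> \<psi> \<in> HomQ a l
       \<and> vl a k \<phi> = vl a l \<psi>}"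
    unfolding p dl_rel_def by simp
qed

lemma dl_img: "k \<ge> 1 \<Longrightarrow> \<phi> \<in> HomQ a k \<Longrightarrow> dl_rel a `` {(k,\<phi>)} = cls a (vl a k \<phi>)"
  unfolding dl_rel_char cls_def by auto

lemma Gamma_iff: "e \<in> Gamma a \<longleftrightarrow> (\<exists>k\<ge>1. a ^ k * e = 0)"
  unfolding Gamma_def by auto

lemma cls_some:
  assumes "e \<in> Gamma a"
  obtains k \<phi> where "(SOME p. p \<in> cls a e) = (k,\<phi>)" "k \<ge> 1" "\<phi> \<in> HomQ a k" "vl a k \<phi> = e"
proof -
  obtain k where k: "k \<ge> 1" "a^k * e = 0" using assms Gamma_iff by blast
  have "(k, hq a k e) \<in> cls a e" unfolding cls_def using k hq_HomQ hq_vl by auto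
  then have "(SOME p. p \<in> cls a e) \<in> cls a e" by (rule someI)
  then show ?thesis using that unfolding cls_def by auto
qed

lemma dl_carrier_eq: "dl_carrier a = cls a ` Gamma a"
proof (intro set_eqI iffI)
  fix X assume "X \<in> dl_carrier a"
  then obtain k \<phi> where "X = dl_rel a `` {(k,\<phi>)}" "k \<ge> 1" "\<phi> \<in> HomQ a k"
    unfolding dl_carrier_def by auto
  moreover have "vl a k \<phi> \<in> Gamma a" using HomQ_ann \<open>k\<ge>1\<close> \<open>\<phi> \<in> _\<close> Gamma_iff by blast
  ultimately show "X \<in> cls a ` Gamma a" using dl_img[of k \<phi> a] by blast
next
  fix X assume "X \<in> cls a ` Gamma a"
  then obtain e where e: "e \<in> Gamma a" "X = cls a e" by auto
  then obtain k where k: "k \<ge> 1" "a^k * e = 0" using Gamma_iff by blast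
  have "X = dl_rel a `` {(k, hq a k e)}" using dl_img[OF k(1) hq_HomQ[OF k(2)]] hq_vl[OF k(2)] e by simp
  then show "X \<in> dl_carrier a" unfolding dl_carrier_def using k hq_HomQ by blast
qed

lemma cls_inj: "inj_on (cls a) (Gamma a)"
proof
  fix e1 e2
  assume a: "e1 \<in> Gamma a" "e2 \<in> Gamma a" "cls a e1 = cls a e2"
  obtain k \<phi> where 1: "(SOME p. p \<in> cls a e1) = (k,\<phi>)" "vl a k \<phi> = e1"
    using cls_some[OF a(1)] by blast
  obtain l \<psi> where 2: "(SOME p. p \<in> cls a e2) = (l,\<psi>)" "vl a l \<psi> = e2"
    using cls_some[OF a(2)] by blast
  from 1(1) 2(1) a(3) have "(k,\<phi>) = (l,\<psi>)" by simp
  then show "e1 = e2" using 1(2) 2(2) by simp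
qed

lemma Gamma_add: assumes "e1 \<in> Gamma a" "e2 \<in> Gamma a" shows "e1 + e2 \<in> Gamma a"
proof -
  obtain k l where "k\<ge>1" "a^k*e1 = 0" "l \<ge> 1" "a^l*e2=0" using assms Gamma_iff by metis
  then have "a^(max k l) * (e1+e2) = 0"
    using pow_ann_mono[of a k e1 "max k l"] pow_ann_mono[of a l e2 "max k l"]
    by (simp add: distrib_left)
  then show ?thesis using Gamma_iff \<open>k \<ge> 1\<close> by (metis max.coboundedI1)
qed

lemma Gamma_smul: assumes "e \<in> Gamma a" shows "r * e \<in> Gamma a"
  using assms unfolding Gamma_iff by (metis mult.left_commute mult_zero_right)

lemma cls_add: assumes "e1 \<in> Gamma a" "e2 \<in> Gamma a"
  shows "dl_add a (cls a e1) (cls a e2) = cls a (e1 + e2)"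
proof -
  obtain k \<phi> where 1: "(SOME p. p \<in> cls a e1) = (k,\<phi>)" "k \<ge> 1" "\<phi> \<in> HomQ a k" "vl a k \<phi> = e1"
    using cls_some[OF assms(1)] by metis
  obtain l \<psi> where 2: "(SOME p. p \<in> cls a e2) = (l,\<psi>)" "l \<ge> 1" "\<psi> \<in> HomQ a l" "vl a l \<psi> = e2"
    using cls_some[OF assms(2)] by metis
  define m where "m = max k l"
  have a1: "a^k * e1 = 0" using HomQ_ann 1 by blast
  have a2: "a^l * e2 = 0" using HomQ_ann 2 by blast
  have t1: "trans_map a k m \<phi> = hq a m e1" using trans_hq[OF a1, of m] HomQ_hq[OF 1(3)] 1 m_def by simp
  have t2: "trans_map a l m \<psi> = hq a m e2" using trans_hq[OF a2, of m] HomQ_hq[OF 2(3)] 2 m_def by simp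
  have am: "a^m * (e1 + e2) = 0" using pow_ann_mono[OF a1, of m] pow_ann_mono[OF a2, of m] m_def
    by (simp add: distrib_left)
  have "dl_add a (cls a e1) (cls a e2) = dl_rel a `` {(m, hq a m (e1+e2))}"
    unfolding dl_add_def 1(1) 2(1) Let_def using t1 t2 by (simp add: m_def hq_add)
  also have "\<dots> = cls a (e1+e2)" using dl_img[of m "hq a m (e1+e2)" a] hq_HomQ[OF am] hq_vl[OF am]
      m_def 1(2) by simp
  finally show ?thesis .
qed

lemma cls_smul: assumes "e \<in> Gamma a"
  shows "dl_smul a r (cls a e) = cls a (r * e)"
proof -
  obtain k \<phi> where 1: "(SOME p. p \<in> cls a e) = (k,\<phi>)" "k \<ge> 1" "\<phi> \<in> HomQ a k" "vl a k \<phi> = e"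
    using cls_some[OF assms(1)] by metis
  have a1: "a^k * e = 0" using HomQ_ann 1 by blast
  have am: "a^k * (r * e) = 0" using a1 by (metis mult.left_commute mult_zero_right)
  have "dl_smul a r (cls a e) = dl_rel a `` {(k, hq a k (r * e))}"
  proof -
    have "hom_smul r \<phi> = hq a k (r * e)"
      by (subst HomQ_hq[OF 1(3)], simp only: 1(4) hq_smul)
    then show ?thesis unfolding dl_smul_def 1(1) Let_def by simp
  qed
  also have "\<dots> = cls a (r * e)" using dl_img[of k "hq a k (r*e)" a] hq_HomQ[OF am] hq_vl[OF am]
      1(2) by simp
  finally show ?thesis .
qed

lemma mod_iso_comp:
  assumes "mod_iso M addM smulM N addN smulN" "bij_betw g M' M"
    "\<forall>x\<in>M'. \<forall>y\<in>M'. g (addM' x y) = addM (g x) (g y)"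
    "\<forall>r. \<forall>x\<in>M'. g (smulM' r x) = smulM r (g x)"
  shows "mod_iso M' addM' smulM' N addN smulN"
proof -
  obtain f where f: "bij_betw f M N" "\<forall>x\<in>M. \<forall>y\<in>M. f (addM x y) = addN (f x) (f y)"
      "\<forall>r. \<forall>x\<in>M. f (smulM r x) = smulN r (f x)" using assms(1) unfolding mod_iso_def by blast
  have gM: "\<And>x. x \<in> M' \<Longrightarrow> g x \<in> M" using assms(2) bij_betwE by blast
  show ?thesis unfolding mod_iso_def
    apply (rule exI[of _ "f \<circ> g"])
    using bij_betw_trans[OF assms(2) f(1)] f(2,3) assms(3,4) gM by simp
qed

lemma hom_inv:
  assumes "bij_betw g M' M"
    "\<forall>x\<in>M'. \<forall>y\<in>M'. g (addM' x y) = addM (g x) (g y)"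
    "\<forall>r. \<forall>x\<in>M'. g (smulM' r x) = smulM r (g x)"
    "\<forall>x\<in>M'. \<forall>y\<in>M'. addM' x y \<in> M'"
    "\<forall>r. \<forall>x\<in>M'. smulM' r x \<in> M'"
  shows "bij_betw (inv_into M' g) M M'"
    "\<forall>x\<in>M. \<forall>y\<in>M. inv_into M' g (addM x y) = addM' (inv_into M' g x) (inv_into M' g y)"
    "\<forall>r. \<forall>x\<in>M. inv_into M' g (smulM r x) = smulM' r (inv_into M' g x)"
proof -
  show "bij_betw (inv_into M' g) M M'" using assms(1) by (rule bij_betw_inv_into)
  have inj: "inj_on g M'" and im: "g ` M' = M" using assms(1) unfolding bij_betw_def by auto
  have iv: "\<And>x. x \<in> M \<Longrightarrow> inv_into M' g x \<in> M' \<and> g (inv_into M' g x) = x"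
    using im by (metis f_inv_into_f inv_into_into)
  show "\<forall>x\<in>M. \<forall>y\<in>M. inv_into M' g (addM x y) = addM' (inv_into M' g x) (inv_into M' g y)"
  proof (intro ballI)
    fix x y assume "x \<in> M" "y \<in> M"
    then have "g (addM' (inv_into M' g x) (inv_into M' g y)) = addM x y" using iv assms(2) by simp
    then show "inv_into M' g (addM x y) = addM' (inv_into M' g x) (inv_into M' g y)"
      using inv_into_f_f[OF inj] assms(4) iv \<open>x\<in>M\<close> \<open>y\<in>M\<close> by metis
  qed
  show "\<forall>r. \<forall>x\<in>M. inv_into M' g (smulM r x) = smulM' r (inv_into M' g x)"
  proof (intro allI ballI)
    fix r x assume "x \<in> M"
    then have "g (smulM' r (inv_into M' g x)) = smulM r x" using iv assms(3) by simp
    then show "inv_into M' g (smulM r x) = smulM' r (inv_into M' g x)"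
      using inv_into_f_f[OF inj] assms(5) iv \<open>x\<in>M\<close> by metis
  qed
qed

lemma P4_iff_P5:
  "mod_iso (dl_carrier a) (dl_add a) (dl_smul a) (HomQ a 1) hom_add hom_smul
   \<longleftrightarrow> mod_iso (Gamma a) (+) (*) (HomQ a 1) hom_add hom_smul"
proof -
  have b: "bij_betw (cls a) (Gamma a) (dl_carrier a)"
    unfolding bij_betw_def using cls_inj dl_carrier_eq by blast
  have h1: "\<forall>x\<in>Gamma a. \<forall>y\<in>Gamma a. cls a (x + y) = dl_add a (cls a x) (cls a y)"
    using cls_add by metis
  have h2: "\<forall>r. \<forall>x\<in>Gamma a. cls a (r * x) = dl_smul a r (cls a x)"
    using cls_smul by metis
  have c1: "\<forall>x\<in>Gamma a. \<forall>y\<in>Gamma a. x + y \<in> Gamma a" using Gamma_add by blast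
  have c2: "\<forall>r. \<forall>x\<in>Gamma a. r * x \<in> Gamma a" using Gamma_smul by blast
  note inv = hom_inv[OF b h1 h2 c1 c2]
  show ?thesis
  proof
    assume "mod_iso (dl_carrier a) (dl_add a) (dl_smul a) (HomQ a 1) hom_add hom_smul"
    then show "mod_iso (Gamma a) (+) (*) (HomQ a 1) hom_add hom_smul"
      using mod_iso_comp[OF _ b h1 h2] by blast
  next
    assume "mod_iso (Gamma a) (+) (*) (HomQ a 1) hom_add hom_smul"
    then show "mod_iso (dl_carrier a) (dl_add a) (dl_smul a) (HomQ a 1) hom_add hom_smul"
      using mod_iso_comp[OF _ inv] by blast
  qed
qed

lemma red_ann:
  assumes "reduced_ring TYPE('a::comm_ring_1)" "(a::'a) ^ k * r = 0" "k \<ge> 1"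
  shows "a * r = 0"
proof -
  have "(a * r) ^ k = (a ^ k * r) * r ^ (k - 1)" using assms(3)
    by (metis mult.assoc power_eq_if power_mult_distrib mult.commute not_one_le_zero)
  then have "(a * r) ^ k = 0" using assms(2) by simp
  then show ?thesis using assms(1) unfolding reduced_ring_def by blast
qed

lemma red_Gamma:
  assumes "reduced_ring TYPE('a::comm_ring_1)"
  shows "Gamma (a::'a) = {r. a * r = 0}"
proof
  show "Gamma a \<subseteq> {r. a * r = 0}" using red_ann[OF assms] Gamma_iff by blast
  show "{r. a * r = 0} \<subseteq> Gamma a" using Gamma_iff by force
qed

lemma triv: "(1::'a::comm_ring_1) = 0 \<Longrightarrow> (x::'a) = 0"
  by (metis mult.right_neutral mult_zero_right)

lemma P1_of_Gamma:
  assumes "\<And>x::'a::comm_ring_1. x \<in> Gamma x \<Longrightarrow> 1 \<in> Gamma x \<Longrightarrow> x = 0"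
  shows "reduced_ring TYPE('a)"
  unfolding reduced_ring_def
proof (intro allI impI)
  fix x :: 'a and n :: nat assume h: "x ^ n = 0"
  show "x = 0"
  proof (cases n)
    case 0 then show ?thesis using h triv by simp
  next
    case (Suc m)
    have "x^n * 1 = 0" "x^n * x = 0" "n \<ge> 1" using h Suc by simp_all
    then have "1 \<in> Gamma x" "x \<in> Gamma x" unfolding Gamma_iff by blast+
    then show ?thesis using assms by blast
  qed
qed

lemma P5_imp:
  assumes "mod_iso (Gamma (x::'a::comm_ring_1)) (+) (*) (HomQ x 1) hom_add hom_smul"
    "x \<in> Gamma x" "1 \<in> Gamma x"
  shows "x = 0"
proof -
  obtain f where f: "bij_betw f (Gamma x) (HomQ x 1)"
      "\<forall>r. \<forall>y\<in>Gamma x. f (r * y) = hom_smul r (f y)" using assms(1) unfolding mod_iso_def by blast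
  have f1: "f 1 \<in> HomQ x 1" using f(1) assms(3) bij_betwE by blast
  define e where "e = vl x 1 (f 1)"
  have fe: "f 1 = hq x 1 e" using HomQ_hq[OF f1] e_def by simp
  have "f x = hq x 1 (x * e)" using f(2) assms(3) fe hq_smul by (metis mult.right_neutral)
  moreover have "x * e = 0" using HomQ_ann[OF f1] e_def by simp
  moreover have "f 0 = hq x 1 (0 * e)" using f(2) assms(3) fe hq_smul by (metis mult_zero_left)
  moreover have "(0::'a) \<in> Gamma x" using Gamma_iff by force
  ultimately show ?thesis using f(1) assms(2) unfolding bij_betw_def inj_on_def by simp
qed

lemma P1_imp_P5:
  assumes "reduced_ring TYPE('a::comm_ring_1)"
  shows "mod_iso (Gamma (a::'a)) (+) (*) (HomQ a 1) hom_add hom_smul"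
proof -
  have G: "Gamma a = {r. a * r = 0}" using red_Gamma[OF assms] .
  have "bij_betw (hq a 1) (Gamma a) (HomQ a 1)"
    unfolding bij_betw_def
  proof
    show "inj_on (hq a 1) (Gamma a)"
      using hq_vl[of a 1] G by (metis (mono_tags, lifting) inj_onI mem_Collect_eq power_one_right)
    show "hq a 1 ` Gamma a = HomQ a 1"
    proof
      show "hq a 1 ` Gamma a \<subseteq> HomQ a 1" using G hq_HomQ[of a 1] by auto
      show "HomQ a 1 \<subseteq> hq a 1 ` Gamma a"
      proof
        fix \<phi> assume "\<phi> \<in> HomQ a 1"
        then show "\<phi> \<in> hq a 1 ` Gamma a" using HomQ_hq HomQ_ann G
          by (metis (mono_tags, lifting) image_eqI mem_Collect_eq power_one_right)
      qed
    qed
  qed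
  then show ?thesis unfolding mod_iso_def using hq_add hq_smul by metis
qed

lemma P2_of_G: assumes G: "\<And>a::'a::comm_ring_1. Gamma a = {r. a * r = 0}" shows "{(a::'a) * r | r. r \<in> Gamma a} = {0}"
proof (rule set_eqI)
  fix x
  have z: "(0::'a) \<in> Gamma a" unfolding Gamma_iff by (rule exI[of _ 1]) simp
  show "x \<in> {a * r | r. r \<in> Gamma a} \<longleftrightarrow> x \<in> {0}"
  proof
    assume "x \<in> {a * r | r. r \<in> Gamma a}"
    then obtain r where r: "x = a * r" "r \<in> Gamma a" by blast
    from r(2) have "a * r = 0" unfolding G[of a] by simp
    then show "x \<in> {0}" using r(1) by simp
  next
    assume "x \<in> {0}"
    then have "x = a * 0" by simp
    then show "x \<in> {a * r | r. r \<in> Gamma a}" using z by blast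
  qed
qed

theorem mainTheorem3:
  fixes R :: "'a::comm_ring_1 itself"
  defines "P1 \<equiv> reduced_ring R"
      and "P2 \<equiv> (\<forall>a::'a. {a * r | r. r \<in> Gamma a} = {0})"
      and "P3 \<equiv> (\<forall>a::'a. \<forall>k::nat. k \<ge> 1 \<longrightarrow> annih a 1 = annih a k)"
      and "P4 \<equiv> (\<forall>a::'a. mod_iso (dl_carrier a) (dl_add a) (dl_smul a)
                                   (HomQ a 1) hom_add hom_smul)"
      and "P5 \<equiv> (\<forall>a::'a. mod_iso (Gamma a) (+) (*) (HomQ a 1) hom_add hom_smul)"
      and "P6 \<equiv> (\<forall>a::'a. ses_Gamma a)"
  shows "(P1 \<longleftrightarrow> P2) \<and> (P1 \<longleftrightarrow> P3) \<and> (P1 \<longleftrightarrow> P4) \<and> (P1 \<longleftrightarrow> P5) \<and> (P1 \<longleftrightarrow> P6)"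
proof -
  have R: "reduced_ring R = reduced_ring TYPE('a)" by (simp add: reduced_ring_def)
  have 15: "P1 \<longleftrightarrow> P5"
  proof
    assume P1 then show P5 unfolding P1_def P5_def R using P1_imp_P5 by blast
  next
    assume P5 then show P1 unfolding P1_def P5_def R using P1_of_Gamma P5_imp by blast
  qed
  have 45: "P4 \<longleftrightarrow> P5" unfolding P4_def P5_def using P4_iff_P5 by blast
  have 12: "P1 \<longleftrightarrow> P2"
  proof
    assume P1
    then have "reduced_ring TYPE('a)" unfolding P1_def R .
    then have "\<And>a::'a. Gamma a = {r. a * r = 0}" by (rule red_Gamma)
    then have "\<And>a::'a. {a * r | r. r \<in> Gamma a} = {0}" by (rule P2_of_G)
    then show P2 unfolding P2_def by blast
  next
    assume P2
    show P1 unfolding P1_def R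
    proof (rule P1_of_Gamma)
      fix x :: 'a assume "1 \<in> Gamma x"
      then have "x * 1 \<in> {x * r | r. r \<in> Gamma x}" by blast
      then show "x = 0" using \<open>P2\<close> unfolding P2_def by simp
    qed
  qed
  have 13: "P1 \<longleftrightarrow> P3"
  proof
    assume P1
    then have red: "reduced_ring TYPE('a)" unfolding P1_def R .
    show P3 unfolding P3_def
    proof (intro allI impI)
      fix a :: 'a and k :: nat assume k: "k \<ge> 1"
      show "annih a 1 = annih a k"
      proof (rule set_eqI)
        fix r
        have "a ^ 1 * r = 0 \<Longrightarrow> a ^ k * r = 0" using pow_ann_mono[of a 1 r k] k by blast
        moreover have "a ^ k * r = 0 \<Longrightarrow> a ^ 1 * r = 0" using red_ann[OF red, of a k r] k by simp
        ultimately show "r \<in> annih a 1 \<longleftrightarrow> r \<in> annih a k" unfolding annih_def by blast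
      qed
    qed
  next
    assume P3
    show P1 unfolding P1_def R
    proof (rule P1_of_Gamma)
      fix x :: 'a assume "1 \<in> Gamma x"
      then obtain k where "k \<ge> 1" "x^k * 1 = 0" using Gamma_iff by blast
      then have "1 \<in> annih x k" unfolding annih_def by simp
      then have "1 \<in> annih x 1" using \<open>P3\<close> \<open>k \<ge> 1\<close> unfolding P3_def by blast
      then show "x = 0" unfolding annih_def by simp
    qed
  qed
  have 16: "P1 \<longleftrightarrow> P6"
  proof
    assume P1
    then have red: "reduced_ring TYPE('a)" unfolding P1_def R .
    show P6 unfolding P6_def ses_Gamma_def
    proof (intro allI conjI)
      fix a :: 'a
      show "inj_on id (Gamma a)" by simp
      show "id ` Gamma a = {r. a * r = 0}" using red_Gamma[OF red, of a] by simp
      show "(\<lambda>r. a * r) ` UNIV = {a * s |s. True}" by blast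
    qed
  next
    assume P6
    show P1 unfolding P1_def R
    proof (rule P1_of_Gamma)
      fix x :: 'a assume "1 \<in> Gamma x"
      moreover have "id ` Gamma x = {r. x * r = 0}" using \<open>P6\<close> unfolding P6_def ses_Gamma_def by blast
      ultimately have "1 \<in> {r. x * r = 0}" by (metis id_apply image_eqI)
      then show "x = 0" by simp
    qed
  qed
  show ?thesis using 12 13 15 45 16 by blast
qed

end
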